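(* Fix $n\ge 2$, distinct indices $i\neq j$ in $\{1,\dots,n\}$, a tolerance $c>0$ and a deviation level $\delta^i>0$; put $\bar\delta=\delta^i+c$ and $U_{\delta^i}=(-\infty,-\bar\delta)\cup(\bar\delta,\infty)$. Let $\Sigma_0$ be the nominal steady-state covariance described in the context, let $\varepsilon^-\in[0,1)$, $\varepsilon^+\ge 0$, and let $$\mathcal M=\{\mathbb P=\mathcal N(0,\Sigma)\text{ on }\mathbb R^n:\ (1-\varepsilon^-)\Sigma_0\preceq\Sigma\preceq(1+\varepsilon^+)\Sigma_0\}.$$ For $\mathbb P=\mathcal N(0,\Sigma)\in\mathcal M$ and $y=(y_1,\dots,y_n)\sim\mathbb P$, let $\sigma_i^2=\Sigma_{ii}$, $\sigma_j^2=\Sigma_{jj}$, $\rho=\Sigma_{ij}/(\sigma_i\sigma_j)$, $\rho'=\sqrt{1-\rho^2}$, $\delta^*=\bar\delta/(\sqrt2\,\sigma_i)$, and $$\mathbb E^j_i(\mathbb P)=\frac{\mathbb E_{\mathbb P}\big[|y_j|\,\mathbf 1_{\{y_i\in U_{\delta^i}\}}\big]}{\mathbb P(y_i\in U_{\delta^i})}.$$ Then for every $\mathbb P\in\mathcal M$, $$\mathbb E^j_i(\mathbb P)=\sqrt{\frac{2}{\pi}}\,\frac{\sigma_j}{1-\operatorname{erf}(\delta^* )}\left[1-\operatorname{erf}\!\left(\frac{\delta^*}{\rho'}\right)+\rho\,\operatorname{erf}\!\left(\frac{\rho\,\delta^*}{\rho'}\right)e^{-(\delta^* )^2}\right],$$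 and the distributionally robust cascading risk $\mathcal R^j_i:=\inf\{\delta\ge 0:\ \sup_{\mathbb P\in\mathcal M}\mathbb E^j_i(\mathbb P)\le \delta+c\}$ equals $0$ if $\sup_{\mathbb P\in\mathcal M}\mathbb E^j_i(\mathbb P)\le c$, and equals $\sup_{\mathbb P\in\mathcal M}\mathbb E^j_i(\mathbb P)-c$ otherwise.
   Context: Setting: $n$ agents with states $x_t\in\mathbb R^n$ evolving by $\mathrm d x_t=-L\,x_{t-\tau}\,\mathrm dt+b\,\mathrm d w_t$, where $w_t$ is an $n$-dimensional standard Brownian motion, $b\neq 0$, $\tau\ge0$, and $L$ is the Laplacian of a connected, undirected, simple graph with positive edge weights $k_{ij}$ ($L_{ij}=-k_{ij}$ for $i\ne j$, $L_{ii}=\sum_j k_{ij}$). Write $L=Q\Lambda Q^\top$ with $Q=[q_1|\dots|q_n]$ orthogonal, $q_1=\mathbf 1_n/\sqrt n$, $\Lambda=\mathrm{diag}(0,\lambda_2,\dots,\lambda_n)$, $0<\lambda_2\le\dots\le\lambda_n$, and assume the stability condition $\tau<\pi/(2\lambda_n)$. The observables are $y_t=M_nx_t$ with $M_n=I_n-\frac1n\mathbf 1_n\mathbf 1_n^\top$; their steady-state distribution is $\mathcal N(0,\Sigma)$ with $\Sigma=b^2M_nQ\Psi Q^\top M_n$, $\Psi=\mathrm{diag}\big(0,\psi(\lambda_2),\dots,\psi(\lambda_n)\big)$, $\psi(\lambda)=\frac{\cos(\lambda\tau)}{2\lambda(1-\sin(\lambda\tau))}$. The nominal covariance $\Sigma_0$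 is this matrix evaluated at nominal parameter values $(b_0,\tau_0,L_0)$ satisfying the same assumptions. $\operatorname{erf}(x)=\frac{2}{\sqrt\pi}\int_0^xe^{-t^2}dt$. *)

theory Defs
  imports "HOL-Probability.Probability"
begin

text \<open>Weighted simple undirected graph on the finite vertex type 'n, given by a
  weight function w: w a b > 0 iff {a,b} is an edge (weight w a b), w a b = 0 otherwise.\<close>
definition weighted_simple_graph :: "('n::finite \<Rightarrow> 'n \<Rightarrow> real) \<Rightarrow> bool" where
  "weighted_simple_graph w \<longleftrightarrow> (\<forall>a b. w a b = w b a) \<and> (\<forall>a. w a a = 0) \<and> (\<forall>a b. 0 \<le> w a b)"

definition graph_connected :: "('n::finite \<Rightarrow> 'n \<Rightarrow> real) \<Rightarrow> bool" where
  "graph_connected w \<longleftrightarrow> (\<forall>a b. (a, b) \<in> {(x, y). 0 < w x y}\<^sup>*)"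

definition laplacian :: "('n::finite \<Rightarrow> 'n \<Rightarrow> real) \<Rightarrow> real^'n^'n" where
  "laplacian w = (\<chi> a b. if a = b then (\<Sum>c\<in>UNIV. w a c) else - w a b)"

definition diag_mat :: "('n::finite \<Rightarrow> real) \<Rightarrow> real^'n^'n" where
  "diag_mat d = (\<chi> a b. if a = b then d a else 0)"

definition centering :: "real^'n^'n" where
  "centering = mat 1 - (1 / real CARD('n)) *\<^sub>R (\<chi> a b. 1)"

definition psi :: "real \<Rightarrow> real \<Rightarrow> real" where
  "psi tau lam = cos (lam * tau) / (2 * lam * (1 - sin (lam * tau)))"

definition loewner_le :: "real^'n^'n \<Rightarrow> real^'n^'n \<Rightarrow> bool" where
  "loewner_le A B \<longleftrightarrow> (\<forall>u::real^'n. u \<bullet> (A *v u) \<le> u \<bullet> (B *v u))"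

text \<open>P is the (possibly degenerate) centred Gaussian N(0,S) on R^n:
  a probability measure on the Borel sets with characteristic function exp(-u^T S u / 2),
  S a symmetric positive semidefinite matrix.\<close>
definition gaussian_vec :: "(real^'n::finite) measure \<Rightarrow> real^'n^'n \<Rightarrow> bool" where
  "gaussian_vec P S \<longleftrightarrow> prob_space P \<and> sets P = sets borel \<and> transpose S = S \<and>
     (\<forall>u. 0 \<le> u \<bullet> (S *v u)) \<and>
     (\<forall>u. integral\<^sup>L P (\<lambda>x. cis (u \<bullet> x)) = complex_of_real (exp (- (u \<bullet> (S *v u)) / 2)))"

definition erf :: "real \<Rightarrow> real" where
  "erf x = 2 / sqrt pi * (LBINT t=0..ereal x. exp (- (t^2)))"

text \<open>erf(a/b), with the value at b = 0 taken as the limit b -> 0+, i.e. sgn a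
  (used for the degenerate case rho' = 0).\<close>
definition erf_div :: "real \<Rightarrow> real \<Rightarrow> real" where
  "erf_div a b = (if b = 0 then sgn a else erf (a / b))"

definition U_set :: "real \<Rightarrow> real set" where
  "U_set dbar = {x. x < - dbar} \<union> {x. dbar < x}"

definition cond_abs_mean :: "(real^'n::finite) measure \<Rightarrow> 'n \<Rightarrow> 'n \<Rightarrow> real \<Rightarrow> real" where
  "cond_abs_mean P i j dbar =
     integral\<^sup>L P (\<lambda>y. \<bar>y $ j\<bar> * indicator {y. y $ i \<in> U_set dbar} y)
     / measure P {y. y $ i \<in> U_set dbar}"

definition closed_form :: "real^'n^'n \<Rightarrow> 'n \<Rightarrow> 'n \<Rightarrow> real \<Rightarrow> real" where
  "closed_form S i j dbar =
     (let si = sqrt (S $ i $ i); sj = sqrt (S $ j $ j);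
          rho = S $ i $ j / (si * sj); rho' = sqrt (1 - rho^2);
          ds = dbar / (sqrt 2 * si)
      in sqrt (2 / pi) * (sj / (1 - erf ds)) *
         (1 - erf_div ds rho' + rho * erf_div (rho * ds) rho' * exp (- (ds^2))))"

end

theory Submission
  imports Defs
begin

lemma erf_0: "erf 0 = 0" by (simp add: erf_def zero_ereal_def)

lemma erf_has_deriv: "(erf has_real_derivative (2 / sqrt pi * exp (- (x^2)))) (at x)"
proof -
  define R where "R = \<bar>x\<bar> + 1"
  have c: "continuous_on {-R..R} (\<lambda>t::real. exp (- (t^2)))"
    by (intro continuous_intros)
  have "((\<lambda>u. LBINT y=ereal 0..ereal u. exp (- (y^2))) has_vector_derivative (exp (- (x^2)))) (at x within {-R..R})"
    by (rule interval_integral_FTC2[OF _ _ c]) (auto simp: R_def)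
  then have "((\<lambda>u. LBINT y=0..ereal u. exp (- (y^2))) has_vector_derivative (exp (- (x^2)))) (at x within {-R..R})"
    by (simp add: zero_ereal_def)
  moreover have "at x within {-R..R} = at x"
    by (rule at_within_Icc_at) (auto simp: R_def)
  ultimately have "((\<lambda>u. LBINT y=0..u. exp (- (y^2))) has_real_derivative (exp (- (x^2)))) (at x)"
    by (simp add: has_real_derivative_iff_has_vector_derivative)
  then have "((\<lambda>u. 2 / sqrt pi * (LBINT y=0..u. exp (- (y^2)))) has_real_derivative (2 / sqrt pi * exp (- (x^2)))) (at x)"
    by (rule DERIV_cmult)
  then show ?thesis unfolding erf_def[abs_def] by simp
qed

lemma erf_odd: "erf (- x) = - erf x"
proof -
  have "(LBINT t=0..ereal (-x). exp (- (t^2))) = (LBINT t=- ereal (-x)..-0. exp (- ((-t)^2)))"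
    by (rule interval_integral_reflect)
  also have "\<dots> = (LBINT t=ereal x..0. exp (- (t^2)))" by (simp add: zero_ereal_def)
  also have "\<dots> = - (LBINT t=0..ereal x. exp (- (t^2)))"
    by (rule interval_integral_endpoints_reverse)
  finally show ?thesis unfolding erf_def by simp
qed

lemma erf_tendsto: "(erf \<longlongrightarrow> 1) at_top"
proof -
  have hb: "has_bochner_integral lborel (\<lambda>x. indicator {0..} x *\<^sub>R exp (- x\<^sup>2)) (sqrt pi / 2)"
    by (rule gaussian_moment_0)
  have si: "set_integrable lborel {0..} (\<lambda>x::real. exp (- x\<^sup>2))"
    using hb unfolding set_integrable_def has_bochner_integral_iff by simp
  have sv: "set_lebesgue_integral lborel {0..} (\<lambda>x::real. exp (- x\<^sup>2)) = sqrt pi / 2"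
    using hb unfolding set_lebesgue_integral_def has_bochner_integral_iff by simp
  have lim: "((\<lambda>b. set_lebesgue_integral lborel {0..b} (\<lambda>x::real. exp (- x\<^sup>2))) \<longlongrightarrow> sqrt pi / 2) at_top"
    using tendsto_set_lebesgue_integral_at_top[OF _ si] sv by simp
  have ev: "eventually (\<lambda>b. 2 / sqrt pi * set_lebesgue_integral lborel {0..b} (\<lambda>x::real. exp (- x\<^sup>2)) = erf b) at_top"
    using eventually_ge_at_top[of "0::real"]
  proof eventually_elim
    case (elim b)
    then show ?case unfolding erf_def using interval_integral_Icc[of 0 b "\<lambda>x. exp (- x\<^sup>2)"]
      by (simp add: zero_ereal_def)
  qed
  have "((\<lambda>b. 2 / sqrt pi * set_lebesgue_integral lborel {0..b} (\<lambda>x::real. exp (- x\<^sup>2))) \<longlongrightarrow> 2 / sqrt pi * (sqrt pi / 2)) at_top"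
    by (intro tendsto_intros lim)
  then have "((\<lambda>b. 2 / sqrt pi * set_lebesgue_integral lborel {0..b} (\<lambda>x::real. exp (- x\<^sup>2))) \<longlongrightarrow> 1) at_top"
    by simp
  then show ?thesis using ev by (rule Lim_transform_eventually)
qed

lemma erf_deriv_intro[derivative_intros]:
  "(f has_real_derivative f') (at x within s) \<Longrightarrow> ((\<lambda>x. erf (f x)) has_real_derivative (2 / sqrt pi * exp (- ((f x)^2)) * f')) (at x within s)"
  by (rule DERIV_chain2[OF erf_has_deriv])

lemma isCont_erf: "isCont erf x"
  using erf_has_deriv by (rule DERIV_isCont)

lemma continuous_on_erf: "continuous_on A erf"
  using isCont_erf by (simp add: continuous_at_imp_continuous_on)

lemma erf_meas[measurable]: "erf \<in> borel_measurable borel"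
  by (rule borel_measurable_continuous_onI) (rule continuous_on_erf)

lemma erf_mono: "x \<le> y \<Longrightarrow> erf x \<le> erf y"
  by (rule DERIV_nonneg_imp_nondecreasing[of x y erf]) (auto intro!: exI erf_has_deriv)

lemma erf_nonneg: "0 \<le> x \<Longrightarrow> 0 \<le> erf x"
  using erf_mono[of 0 x] erf_0 by simp

lemma erf_sign: "0 \<le> m * erf m"
proof (cases "0 \<le> m")
  case True then show ?thesis using erf_nonneg by simp
next
  case False then have "0 \<le> erf (-m)" by (intro erf_nonneg) simp
  then show ?thesis using False by (simp add: erf_odd mult_nonpos_nonpos)
qed

lemma erf_le1: "erf x \<le> 1"
  by (rule tendsto_lowerbound[OF erf_tendsto]) (auto intro!: eventually_at_top_linorderI[of x] erf_mono)

lemma erf_ge_m1: "- 1 \<le> erf x"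
  using erf_le1[of "-x"] by (simp add: erf_odd)

lemma erf_lin_lim: "\<exists>L. ((\<lambda>x. erf (k * x)) \<longlongrightarrow> L) at_top"
proof (cases k "0::real" rule: linorder_cases)
  case less
  have "filterlim (\<lambda>x. (-k) * x) at_top at_top"
    using less by (intro filterlim_tendsto_pos_mult_at_top[OF tendsto_const]) (auto simp: filterlim_ident)
  then have "((\<lambda>x. erf ((-k) * x)) \<longlongrightarrow> 1) at_top" by (rule filterlim_compose[OF erf_tendsto])
  then have "((\<lambda>x. - erf ((-k) * x)) \<longlongrightarrow> -1) at_top" by (rule tendsto_minus)
  then show ?thesis by (auto simp: erf_odd[symmetric])
next
  case equal then show ?thesis by (auto simp: erf_0)
next
  case greater
  have "filterlim (\<lambda>x. k * x) at_top at_top"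
    using greater by (intro filterlim_tendsto_pos_mult_at_top[OF tendsto_const]) (auto simp: filterlim_ident)
  then have "((\<lambda>x. erf (k * x)) \<longlongrightarrow> 1) at_top" by (rule filterlim_compose[OF erf_tendsto])
  then show ?thesis by auto
qed

lemma phi_tendsto: "(std_normal_density \<longlongrightarrow> 0) at_top"
proof -
  have "((\<lambda>x::real. 1 / sqrt (2 * pi) * exp (- x\<^sup>2 / 2)) \<longlongrightarrow> 1 / sqrt (2 * pi) * 0) at_top"
    by (intro tendsto_intros filterlim_compose[OF exp_at_bot]) real_asymp
  then show ?thesis unfolding std_normal_density_def[abs_def] by simp
qed

abbreviation "phi \<equiv> std_normal_density"

lemma phi_def': "phi x = exp (- (x^2) / 2) / sqrt (2 * pi)"
  by (simp add: std_normal_density_def)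

lemma phi_pos: "0 < phi x" by (simp add: phi_def')
lemma phi_even: "phi (- x) = phi x" by (simp add: phi_def')
lemma phi_meas[measurable]: "phi \<in> borel_measurable borel" by simp

lemma sqrt2pi: "sqrt (2 * pi) = sqrt 2 * sqrt pi" by (simp add: real_sqrt_mult)

lemma deriv_Phi: "DERIV (\<lambda>x. erf (x / sqrt 2) / 2) x :> phi x"
proof -
  have "DERIV (\<lambda>x. erf (x / sqrt 2) / 2) x :> 2 / sqrt pi * exp (- ((x / sqrt 2)^2)) * (1 / sqrt 2) / 2"
    by (auto intro!: derivative_eq_intros simp: field_simps)
  moreover have "2 / sqrt pi * exp (- ((x / sqrt 2)^2)) * (1 / sqrt 2) / 2 = phi x"
    by (simp add: phi_def' power_divide field_simps real_sqrt_mult)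
  ultimately show ?thesis by simp
qed

lemma deriv_phi: "DERIV phi x :> - x * phi x"
proof -
  have "DERIV (\<lambda>x. exp (- (x^2) / 2) / sqrt (2 * pi)) x :> exp (- (x^2) / 2) * (- (2 * x) / 2) / sqrt (2 * pi)"
    by (auto intro!: derivative_eq_intros simp: field_simps)
  then show ?thesis unfolding phi_def'[abs_def] by (simp add: field_simps)
qed

lemma tail_N: "(\<integral>\<^sup>+x. ennreal (phi x) * indicator {z..} x \<partial>lborel) = ennreal ((1 - erf (z / sqrt 2)) / 2)"
proof -
  have lim: "((\<lambda>x. erf (x / sqrt 2) / 2) \<longlongrightarrow> 1 / 2) at_top"
  proof -
    have "filterlim (\<lambda>x::real. x / sqrt 2) at_top at_top"
      by real_asymp
    then show ?thesis by (intro tendsto_divide filterlim_compose[OF erf_tendsto]) auto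
  qed
  have "(\<integral>\<^sup>+x. ennreal (phi x) * indicator {z..} x \<partial>lborel) = 1 / 2 - erf (z / sqrt 2) / 2"
    by (rule nn_integral_FTC_atLeast[OF phi_meas deriv_Phi _ lim]) (simp add: less_imp_le phi_pos)
  then show ?thesis by (simp add: diff_divide_distrib)
qed

lemma reflect_nn:
  fixes f :: "real \<Rightarrow> ennreal"
  assumes [measurable]: "f \<in> borel_measurable borel"
  shows "(\<integral>\<^sup>+x. f x \<partial>lborel) = (\<integral>\<^sup>+x. f (- x) \<partial>lborel)"
proof -
  have "(\<integral>\<^sup>+x. f x \<partial>lborel) = ennreal \<bar>- 1\<bar> * (\<integral>\<^sup>+x. f (0 + (- 1) * x) \<partial>lborel)"
    by (rule nn_integral_real_affine) auto
  also have "\<dots> = (\<integral>\<^sup>+x. f (- x) \<partial>lborel)" by simp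
  finally show ?thesis .
qed

lemma pos_part:
  fixes m g :: real assumes g: "0 < g"
  shows "(\<integral>\<^sup>+t. ennreal (phi t * max 0 (m + g * t)) \<partial>lborel)
       = ennreal (m / 2 - m * erf ((- m / g) / sqrt 2) / 2 + g * phi (- m / g))"
    and "0 \<le> m / 2 - m * erf ((- m / g) / sqrt 2) / 2 + g * phi (- m / g)"
proof -
  define t0 where "t0 = - m / g"
  have pw: "ennreal (phi t * max 0 (m + g * t)) = ennreal ((m + g * t) * phi t) * indicator {t0..} t" for t
  proof (cases "t0 \<le> t")
    case True
    then have "0 \<le> m + g * t" using g unfolding t0_def by (simp add: field_simps)
    then show ?thesis using True by (simp add: mult.commute)
  next
    case False
    then have "m + g * t < 0" using g unfolding t0_def by (simp add: field_simps)
    then show ?thesis using False by simp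
  qed
  define F where "F t = m * (erf (t / sqrt 2) / 2) - g * phi t" for t
  have dF: "DERIV F t :> (m + g * t) * phi t" for t
  proof -
    have "DERIV F t :> m * phi t - g * (- t * phi t)"
      unfolding F_def[abs_def] by (intro DERIV_diff DERIV_cmult deriv_Phi deriv_phi)
    then show ?thesis by (simp add: algebra_simps)
  qed
  have nn: "t0 \<le> t \<Longrightarrow> 0 \<le> (m + g * t) * phi t" for t
    using g phi_pos[of t] unfolding t0_def by (intro mult_nonneg_nonneg) (auto simp: field_simps)
  have lim: "(F \<longlongrightarrow> m * (1 / 2) - g * 0) at_top"
  proof -
    have "filterlim (\<lambda>x::real. x / sqrt 2) at_top at_top" by real_asymp
    then have "((\<lambda>x. erf (x / sqrt 2)) \<longlongrightarrow> 1) at_top" by (rule filterlim_compose[OF erf_tendsto])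
    then show ?thesis unfolding F_def[abs_def] by (intro tendsto_intros phi_tendsto) auto
  qed
  have "(\<integral>\<^sup>+t. ennreal ((m + g * t) * phi t) * indicator {t0..} t \<partial>lborel) = m * (1 / 2) - g * 0 - F t0"
    by (rule nn_integral_FTC_atLeast[OF _ dF nn lim]) simp
  then show "(\<integral>\<^sup>+t. ennreal (phi t * max 0 (m + g * t)) \<partial>lborel)
       = ennreal (m / 2 - m * erf ((- m / g) / sqrt 2) / 2 + g * phi (- m / g))"
    unfolding pw F_def t0_def by (simp add: algebra_simps)
  have mono: "F t0 \<le> F t" if "t0 \<le> t" for t
    by (rule DERIV_nonneg_imp_nondecreasing[OF that]) (use dF nn in auto)
  have "F t0 \<le> m * (1 / 2) - g * 0"
    by (rule tendsto_lowerbound[OF lim]) (auto intro!: eventually_at_top_linorderI[of t0] mono)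
  then show "0 \<le> m / 2 - m * erf ((- m / g) / sqrt 2) / 2 + g * phi (- m / g)"
    unfolding F_def t0_def by (simp add: algebra_simps)
qed

lemma inner_K:
  fixes m g :: real assumes g: "0 < g"
  shows "(\<integral>\<^sup>+t. ennreal (phi t * \<bar>m + g * t\<bar>) \<partial>lborel)
       = ennreal (m * erf (m / (g * sqrt 2)) + 2 * g * phi (m / g))"
proof -
  have pw: "ennreal (phi t * \<bar>m + g * t\<bar>) = ennreal (phi t * max 0 (m + g * t)) + ennreal (phi t * max 0 (- m + g * (- t)))" for t
    using phi_pos[of t] by (subst ennreal_plus[symmetric]) (auto simp: abs_if max_def intro!: arg_cong[where f=ennreal] simp: algebra_simps)
  have "(\<integral>\<^sup>+t. ennreal (phi t * \<bar>m + g * t\<bar>) \<partial>lborel) =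
      (\<integral>\<^sup>+t. ennreal (phi t * max 0 (m + g * t)) \<partial>lborel) + (\<integral>\<^sup>+t. ennreal (phi t * max 0 (- m + g * (- t))) \<partial>lborel)"
    unfolding pw by (rule nn_integral_add) auto
  also have "(\<integral>\<^sup>+t. ennreal (phi t * max 0 (- m + g * (- t))) \<partial>lborel) = (\<integral>\<^sup>+t. ennreal (phi t * max 0 (- m + g * t)) \<partial>lborel)"
    by (subst reflect_nn) (auto simp: phi_even)
  also have "(\<integral>\<^sup>+t. ennreal (phi t * max 0 (m + g * t)) \<partial>lborel) + (\<integral>\<^sup>+t. ennreal (phi t * max 0 (- m + g * t)) \<partial>lborel)
     = ennreal (m / 2 - m * erf ((- m / g) / sqrt 2) / 2 + g * phi (- m / g)) + ennreal ((- m) / 2 - (- m) * erf ((- (- m) / g) / sqrt 2) / 2 + g * phi (- (- m) / g))"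
    unfolding pos_part(1)[OF g] ..
  also have "\<dots> = ennreal (m * erf (m / (g * sqrt 2)) + 2 * g * phi (m / g))"
  proof -
    have e1: "erf ((- m / g) / sqrt 2) = - erf (m / (g * sqrt 2))"
      using erf_odd[of "m / (g * sqrt 2)"] by (simp add: field_simps)
    have e2: "erf ((- (- m) / g) / sqrt 2) = erf (m / (g * sqrt 2))" by (simp add: field_simps)
    have p1: "phi (- m / g) = phi (m / g)" using phi_even[of "m / g"] by simp
    have nn1: "0 \<le> m / 2 - m * erf ((- m / g) / sqrt 2) / 2 + g * phi (- m / g)"
      by (rule pos_part(2)[OF g])
    have nn2: "0 \<le> (- m) / 2 - (- m) * erf ((- (- m) / g) / sqrt 2) / 2 + g * phi (- (- m) / g)"
      by (rule pos_part(2)[OF g])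
    have "ennreal (m / 2 - m * erf ((- m / g) / sqrt 2) / 2 + g * phi (- m / g)) + ennreal ((- m) / 2 - (- m) * erf ((- (- m) / g) / sqrt 2) / 2 + g * phi (- (- m) / g))
      = ennreal ((m / 2 - m * erf ((- m / g) / sqrt 2) / 2 + g * phi (- m / g)) + ((- m) / 2 - (- m) * erf ((- (- m) / g) / sqrt 2) / 2 + g * phi (- (- m) / g)))"
      by (rule ennreal_plus[symmetric, OF nn1 nn2])
    also have "(m / 2 - m * erf ((- m / g) / sqrt 2) / 2 + g * phi (- m / g)) + ((- m) / 2 - (- m) * erf ((- (- m) / g) / sqrt 2) / 2 + g * phi (- (- m) / g))
      = m * erf (m / (g * sqrt 2)) + 2 * g * phi (m / g)"
      unfolding e1 e2 p1 by (simp add: algebra_simps)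
    finally show ?thesis .
  qed
  finally show ?thesis .
qed

definition Kc :: "real \<Rightarrow> real \<Rightarrow> real" where
  "Kc m g = m * erf (m / (g * sqrt 2)) + 2 * g * phi (m / g)"

lemma Kc_nonneg: "0 < g \<Longrightarrow> 0 \<le> Kc m g"
proof -
  assume g: "0 < g"
  have "0 \<le> (m / (g * sqrt 2)) * erf (m / (g * sqrt 2))" by (rule erf_sign)
  moreover have "0 < g * sqrt 2" using g by simp
  ultimately have "0 \<le> m * erf (m / (g * sqrt 2))" by (auto simp: zero_le_divide_iff)
  then show ?thesis unfolding Kc_def using g phi_pos[of "m / g"] by simp
qed

lemma Kc_even: "Kc (- m) g = Kc m g"
  unfolding Kc_def using erf_odd[of "m / (g * sqrt 2)"] phi_even[of "m / g"] by simp

lemma outer_half: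
  fixes b g z0 :: real assumes g: "0 < g"
  defines "sj \<equiv> sqrt (b^2 + g^2)"
  shows "(\<integral>\<^sup>+x. ennreal (phi x * Kc (b * x) g) * indicator {z0..} x \<partial>lborel)
     = ennreal (sj / sqrt (2 * pi) * (1 - erf (sj * z0 / (g * sqrt 2))) + b * phi z0 * erf (b * z0 / (g * sqrt 2)))"
proof -
  have "0 < g^2" using g by simp
  then have bg: "0 < b^2 + g^2" using zero_le_power2[of b] by linarith
  have sjpos: "0 < sj" unfolding sj_def using bg by simp
  have sj2: "sj^2 = b^2 + g^2" unfolding sj_def by (simp add: add_nonneg_nonneg)
  define H where "H x = - b * (phi x * erf (b * x / (g * sqrt 2))) + sj / sqrt (2 * pi) * erf (sj * x / (g * sqrt 2))" for x
  have dH: "DERIV H x :> phi x * Kc (b * x) g" for x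
  proof -
    define E where "E = exp (- (x^2) / 2 - b^2 * x^2 / (2 * g^2))"
    have d1: "DERIV (\<lambda>x. erf (b * x / (g * sqrt 2))) x :> 2 / sqrt pi * exp (- ((b * x / (g * sqrt 2))^2)) * (b / (g * sqrt 2))"
      using g by (intro erf_deriv_intro) (auto intro!: derivative_eq_intros)
    have d2: "DERIV (\<lambda>x. erf (sj * x / (g * sqrt 2))) x :> 2 / sqrt pi * exp (- ((sj * x / (g * sqrt 2))^2)) * (sj / (g * sqrt 2))"
      using g by (intro erf_deriv_intro) (auto intro!: derivative_eq_intros)
    have dd: "DERIV H x :> - b * ((- x * phi x) * erf (b * x / (g * sqrt 2)) + (2 / sqrt pi * exp (- ((b * x / (g * sqrt 2))^2)) * (b / (g * sqrt 2))) * phi x)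
        + sj / sqrt (2 * pi) * (2 / sqrt pi * exp (- ((sj * x / (g * sqrt 2))^2)) * (sj / (g * sqrt 2)))"
      unfolding H_def[abs_def] by (intro DERIV_add DERIV_cmult DERIV_mult deriv_phi d1 d2)
    have A: "phi x * exp (- ((b * x / (g * sqrt 2))^2)) = E / sqrt (2 * pi)"
      unfolding phi_def' E_def using g by (simp add: exp_add[symmetric] power_divide power_mult_distrib field_simps)
    have B: "exp (- ((sj * x / (g * sqrt 2))^2)) = E"
      unfolding E_def using g by (simp add: power_divide power_mult_distrib sj2 field_simps)
    have C: "phi x * phi (b * x / g) = E / (2 * pi)"
      unfolding phi_def' E_def using g by (simp add: exp_add[symmetric] power_divide power_mult_distrib field_simps)
    have sq: "sqrt pi * sqrt 2 * sqrt (2 * pi) = 2 * pi"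
    proof -
      have "sqrt pi * sqrt 2 * sqrt (2 * pi) = (sqrt pi * sqrt pi) * (sqrt 2 * sqrt 2)"
        by (simp add: real_sqrt_mult mult_ac)
      also have "\<dots> = 2 * pi" by simp
      finally show ?thesis .
    qed
    have "- b * ((- x * phi x) * erf (b * x / (g * sqrt 2)) + (2 / sqrt pi * exp (- ((b * x / (g * sqrt 2))^2)) * (b / (g * sqrt 2))) * phi x)
        + sj / sqrt (2 * pi) * (2 / sqrt pi * exp (- ((sj * x / (g * sqrt 2))^2)) * (sj / (g * sqrt 2)))
        = b * x * phi x * erf (b * x / (g * sqrt 2)) + 2 * (sj^2 - b^2) * E / (g * (sqrt pi * sqrt 2 * sqrt (2 * pi)))"
      using g A B by (simp add: field_simps power2_eq_square)
    also have "\<dots> = phi x * Kc (b * x) g"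
      unfolding Kc_def sq sj2 using g C by (simp add: field_simps power2_eq_square)
    finally have eq: "- b * ((- x * phi x) * erf (b * x / (g * sqrt 2)) + (2 / sqrt pi * exp (- ((b * x / (g * sqrt 2))^2)) * (b / (g * sqrt 2))) * phi x)
        + sj / sqrt (2 * pi) * (2 / sqrt pi * exp (- ((sj * x / (g * sqrt 2))^2)) * (sj / (g * sqrt 2))) = phi x * Kc (b * x) g" .
    show ?thesis using dd unfolding eq .
  qed
  have nn: "0 \<le> phi x * Kc (b * x) g" for x
    using phi_pos[of x] Kc_nonneg[OF g, of "b * x"] by simp
  have lim: "(H \<longlongrightarrow> sj / sqrt (2 * pi)) at_top"
  proof -
    have eqk: "(\<lambda>x. erf (b * x / (g * sqrt 2))) = (\<lambda>x. erf ((b / (g * sqrt 2)) * x))" by (simp add: field_simps)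
    obtain L where L: "((\<lambda>x. erf ((b / (g * sqrt 2)) * x)) \<longlongrightarrow> L) at_top" using erf_lin_lim by blast
    have eqc: "(\<lambda>x. erf (sj * x / (g * sqrt 2))) = (\<lambda>x. erf ((sj / (g * sqrt 2)) * x))" by (simp add: field_simps)
    have "filterlim (\<lambda>x::real. (sj / (g * sqrt 2)) * x) at_top at_top"
      using sjpos g by (intro filterlim_tendsto_pos_mult_at_top[OF tendsto_const]) (auto simp: filterlim_ident)
    then have c1: "((\<lambda>x. erf ((sj / (g * sqrt 2)) * x)) \<longlongrightarrow> 1) at_top"
      by (rule filterlim_compose[OF erf_tendsto])
    have "(H \<longlongrightarrow> - b * (0 * L) + sj / sqrt (2 * pi) * 1) at_top"
      using L c1 unfolding H_def[abs_def] eqk[symmetric] eqc[symmetric] by (intro tendsto_intros phi_tendsto)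
    then show ?thesis by simp
  qed
  have "(\<integral>\<^sup>+x. ennreal (phi x * Kc (b * x) g) * indicator {z0..} x \<partial>lborel) = sj / sqrt (2 * pi) - H z0"
    by (rule nn_integral_FTC_atLeast[OF _ dH nn lim]) (simp add: Kc_def)
  then show ?thesis unfolding H_def by (simp add: algebra_simps)
qed

lemma outer_deg:
  fixes b z0 :: real assumes z0: "0 \<le> z0"
  shows "(\<integral>\<^sup>+x. ennreal (phi x * \<bar>b * x\<bar>) * indicator {z0..} x \<partial>lborel) = ennreal (\<bar>b\<bar> * phi z0)"
proof -
  have "(\<integral>\<^sup>+x. ennreal (phi x * \<bar>b * x\<bar>) * indicator {z0..} x \<partial>lborel)
      = (\<integral>\<^sup>+x. ennreal (\<bar>b\<bar> * x * phi x) * indicator {z0..} x \<partial>lborel)"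
    by (rule nn_integral_cong) (use z0 in \<open>auto simp: indicator_def abs_mult\<close>)
  also have "\<dots> = \<bar>b\<bar> * 0 - (- \<bar>b\<bar> * phi z0)"
  proof (rule nn_integral_FTC_atLeast)
    show "DERIV (\<lambda>x. - \<bar>b\<bar> * phi x) x :> \<bar>b\<bar> * x * phi x" for x
      using DERIV_cmult[OF deriv_phi[of x], of "- \<bar>b\<bar>"] by (simp add: mult.assoc)
    show "0 \<le> \<bar>b\<bar> * x * phi x" if "z0 \<le> x" for x
      using that z0 phi_pos[of x] by simp
    show "((\<lambda>x. - \<bar>b\<bar> * phi x) \<longlongrightarrow> \<bar>b\<bar> * 0) at_top"
      using tendsto_mult[OF tendsto_const[of "- \<bar>b\<bar>"] phi_tendsto] by simp
  qed simp
  finally show ?thesis by simp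
qed

lemma U_split:
  fixes sg a x :: real assumes "0 < sg" "0 < a"
  shows "indicator (U_set a) (sg * x) = (indicator {a / sg<..} x + indicator {..<- (a / sg)} x :: ennreal)"
  using assms by (auto simp: U_set_def indicator_def field_simps)

lemma U_integral:
  fixes sg a :: real and f :: "real \<Rightarrow> real"
  assumes "0 < sg" "0 < a" and f[measurable]: "f \<in> borel_measurable borel" and ev: "\<And>x. f (- x) = f x"
  shows "(\<integral>\<^sup>+x. ennreal (f x) * indicator (U_set a) (sg * x) \<partial>lborel)
       = 2 * (\<integral>\<^sup>+x. ennreal (f x) * indicator {a / sg..} x \<partial>lborel)"
proof -
  have "(\<integral>\<^sup>+x. ennreal (f x) * indicator (U_set a) (sg * x) \<partial>lborel)
     = (\<integral>\<^sup>+x. ennreal (f x) * indicator {a / sg<..} x + ennreal (f x) * indicator {..<- (a / sg)} x \<partial>lborel)"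
    unfolding U_split[OF assms(1,2)] by (simp add: distrib_left)
  also have "\<dots> = (\<integral>\<^sup>+x. ennreal (f x) * indicator {a / sg<..} x \<partial>lborel) + (\<integral>\<^sup>+x. ennreal (f x) * indicator {..<- (a / sg)} x \<partial>lborel)"
    by (rule nn_integral_add) auto
  also have "(\<integral>\<^sup>+x. ennreal (f x) * indicator {..<- (a / sg)} x \<partial>lborel) = (\<integral>\<^sup>+x. ennreal (f (- x)) * indicator {..<- (a / sg)} (- x) \<partial>lborel)"
    by (rule reflect_nn) auto
  also have "\<dots> = (\<integral>\<^sup>+x. ennreal (f x) * indicator {a / sg<..} x \<partial>lborel)"
    by (rule nn_integral_cong) (auto simp: ev indicator_def)
  also have "(\<integral>\<^sup>+x. ennreal (f x) * indicator {a / sg<..} x \<partial>lborel) = (\<integral>\<^sup>+x. ennreal (f x) * indicator {a / sg..} x \<partial>lborel)"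
    by (rule nn_integral_cong_AE) (use AE_lborel_singleton[of "a / sg"] in \<open>auto elim!: eventually_mono simp: indicator_def\<close>)
  finally show ?thesis by (simp add: mult_2)
qed

lemma weighted_law:
  fixes P :: "'a measure" and X h :: "'a \<Rightarrow> real" and D :: "real measure"
  assumes P: "prob_space P" and X[measurable]: "X \<in> borel_measurable P"
    and h[measurable]: "h \<in> borel_measurable P" and hnn: "\<And>y. 0 \<le> h y"
    and hint: "integrable P h" and h1: "(\<integral>y. h y \<partial>P) = 1"
    and D: "real_distribution D"
    and ch: "\<And>s. (CLINT y|P. complex_of_real (h y) * iexp (s * X y)) = char D s"
    and B[measurable]: "B \<in> sets borel"
  shows "(\<integral>y. h y * indicator B (X y) \<partial>P) = measure D B"
proof -
  interpret P: prob_space P by fact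
  define M' where "M' = density P (\<lambda>y. ennreal (h y))"
  have spM: "space M' = space P" "sets M' = sets P" by (auto simp: M'_def)
  have nn1: "(\<integral>\<^sup>+y. ennreal (h y) \<partial>P) = 1"
    using nn_integral_eq_integral[OF hint] hnn h1 by simp
  have "emeasure M' (space M') = 1"
  proof -
    have "emeasure M' (space M') = (\<integral>\<^sup>+y. ennreal (h y) * indicator (space P) y \<partial>P)"
      unfolding M'_def space_density by (rule emeasure_density) auto
    also have "\<dots> = (\<integral>\<^sup>+y. ennreal (h y) \<partial>P)"
      by (rule nn_integral_cong) auto
    finally show ?thesis using nn1 by simp
  qed
  then have pM': "prob_space M'" by (rule prob_spaceI)
  interpret M': prob_space M' by fact
  have Xm: "X \<in> borel_measurable M'" using X unfolding M'_def by (simp only: measurable_cong_sets[OF sets_density refl])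
  have RD: "real_distribution (distr M' borel X)"
    using Xm by (rule M'.real_distribution_distr)
  have "char (distr M' borel X) = char D"
  proof
    fix s
    have "char (distr M' borel X) s = (CLINT y|M'. iexp (s * X y))"
      unfolding char_def by (subst integral_distr) (use Xm in auto)
    also have "\<dots> = (CLINT y|P. h y *\<^sub>R iexp (s * X y))"
      unfolding M'_def by (subst integral_density) (auto simp: hnn)
    also have "\<dots> = char D s" using ch[of s] by (simp add: scaleR_conv_of_real)
    finally show "char (distr M' borel X) s = char D s" .
  qed
  then have eqD: "distr M' borel X = D"
    using Levy_uniqueness[OF RD D] by simp
  have "measure D B = measure M' (X -` B \<inter> space M')"
    using eqD[symmetric] Xm by (simp add: measure_distr)
  also have "\<dots> = (\<integral>y. indicator (X -` B \<inter> space M') y \<partial>M')" by simp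
  also have "\<dots> = (\<integral>y. h y *\<^sub>R indicator (X -` B \<inter> space M') y \<partial>P)"
    unfolding M'_def by (subst integral_density) (auto simp: hnn)
  also have "\<dots> = (\<integral>y. h y * indicator B (X y) \<partial>P)"
    by (rule Bochner_Integration.integral_cong) (auto simp: spM indicator_def)
  finally show ?thesis by simp
qed

lemma sum_two_if:
  fixes f :: "'n::finite \<Rightarrow> real"
  assumes "i \<noteq> j"
  shows "(\<Sum>k\<in>UNIV. (if k = i then x else if k = j then y else 0) * f k) = x * f i + y * f j"
proof -
  have "(\<Sum>k\<in>UNIV. (if k = i then x else if k = j then y else 0) * f k)
      = (\<Sum>k\<in>UNIV. (if k = i then x * f i else 0) + (if k = j then y * f j else 0))"
    by (rule sum.cong) (use assms in auto)
  also have "\<dots> = x * f i + y * f j" by (simp add: sum.distrib)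
  finally show ?thesis .
qed

lemma sum_two_if':
  fixes f :: "'n::finite \<Rightarrow> real"
  assumes "i \<noteq> j"
  shows "(\<Sum>k\<in>UNIV. f k * (if k = i then x else if k = j then y else 0)) = x * f i + y * f j"
  using sum_two_if[OF assms, of x y f] by (simp add: mult.commute)

definition vec2 :: "'n::finite \<Rightarrow> 'n \<Rightarrow> real \<Rightarrow> real \<Rightarrow> real^'n" where
  "vec2 i j x y = (\<chi> k. if k = i then x else if k = j then y else 0)"

lemma vec2_inner:
  fixes z :: "real^'n::finite"
  assumes "i \<noteq> j" shows "vec2 i j x y \<bullet> z = x * z $ i + y * z $ j"
  unfolding vec2_def inner_vec_def using sum_two_if[OF assms, of x y "\<lambda>k. z $ k"] by simp

lemma vec2_quad:
  fixes S :: "real^'n^'n::finite"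
  assumes "i \<noteq> j" "transpose S = S"
  shows "vec2 i j x y \<bullet> (S *v vec2 i j x y) = x^2 * S$i$i + 2 * x * y * S$i$j + y^2 * S$j$j"
proof -
  have sym: "S$j$i = S$i$j" using assms(2) by (metis transpose_def vec_lambda_beta)
  have mv: "(S *v vec2 i j x y) $ k = x * S$k$i + y * S$k$j" for k
    unfolding matrix_vector_mult_def vec2_def using sum_two_if'[OF assms(1), of "\<lambda>l. S$k$l" x y] by simp
  show ?thesis
    unfolding vec2_inner[OF assms(1)] mv using sym by (simp add: power2_eq_square algebra_simps)
qed

locale gauss2 =
  fixes P :: "(real^'n::finite) measure" and S :: "real^'n^'n" and i j :: 'n
  assumes gv: "gaussian_vec P S" and ij: "i \<noteq> j" and Sii: "0 < S$i$i"
begin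

lemma prob: "prob_space P" and sets_P[measurable_cong]: "sets P = sets borel"
  and symS: "transpose S = S" and psd: "\<And>u. 0 \<le> u \<bullet> (S *v u)"
  and chr: "\<And>u. integral\<^sup>L P (\<lambda>x. cis (u \<bullet> x)) = complex_of_real (exp (- (u \<bullet> (S *v u)) / 2))"
  using gv unfolding gaussian_vec_def by auto

sublocale P: prob_space P by (rule prob)

lemma space_P: "space P = UNIV" using sets_eq_imp_space_eq[OF sets_P] by simp

definition "sig = sqrt (S$i$i)"
definition "Z y = y$i / sig"
definition "al = S$i$j / S$i$i"
definition "e y = y$j - al * y$i"
definition "v = S$j$j - (S$i$j)^2 / S$i$i"

lemma sig_pos: "0 < sig" using Sii by (simp add: sig_def)
lemma sig_sq: "sig^2 = S$i$i" using Sii by (simp add: sig_def)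

lemma cs: "(S$i$j)^2 \<le> S$i$i * S$j$j"
proof -
  have "0 \<le> vec2 i j (S$i$j) (- S$i$i) \<bullet> (S *v vec2 i j (S$i$j) (- S$i$i))" by (rule psd)
  also have "\<dots> = S$i$i * (S$i$i * S$j$j - (S$i$j)^2)"
    unfolding vec2_quad[OF ij symS] by (simp add: power2_eq_square algebra_simps)
  finally show ?thesis using Sii by (simp add: zero_le_mult_iff)
qed

lemma v_nonneg: "0 \<le> v"
  using cs Sii unfolding v_def by (simp add: field_simps)

lemma Z_meas[measurable]: "Z \<in> borel_measurable P" unfolding Z_def by measurable
lemma e_meas[measurable]: "e \<in> borel_measurable P" unfolding e_def by measurable

lemma yj_eq: "y$j = (al * sig) * Z y + e y"
  using sig_pos by (simp add: Z_def e_def)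

lemma C: "(CLINT y|P. cis (a * Z y + b * e y)) = complex_of_real (exp (- (a^2 + b^2 * v) / 2))"
proof -
  define u where "u = vec2 i j (a / sig - b * al) b"
  have 1: "a * Z y + b * e y = u \<bullet> y" for y
    unfolding u_def vec2_inner[OF ij] Z_def e_def by (simp add: algebra_simps)
  have 2: "u \<bullet> (S *v u) = a^2 + b^2 * v"
    unfolding u_def vec2_quad[OF ij symS] using sig_sq sig_pos Sii
    by (simp add: v_def al_def power2_eq_square field_simps)
  have "(CLINT y|P. cis (a * Z y + b * e y)) = (CLINT y|P. cis (u \<bullet> y))"
    by (simp add: 1)
  also have "\<dots> = complex_of_real (exp (- (a^2 + b^2 * v) / 2))" using chr[of u] 2 by simp
  finally show ?thesis .
qed

end

lemma cos_cis: "complex_of_real (cos x) = (cis x + cis (-x)) / 2"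
  by (simp add: complex_eq_iff)
lemma sin_cis: "complex_of_real (sin x) = (cis x - cis (-x)) / (2 * \<i>)"
proof -
  have "cis x - cis (-x) = 2 * \<i> * sin x" by (simp add: complex_eq_iff)
  then show ?thesis by simp
qed
lemma iexp_cis: "iexp x = cis x" by (simp add: cis_conv_exp)

context gauss2 begin

abbreviation "N \<equiv> std_normal_distribution"
definition "G = distr N borel (\<lambda>x. sqrt v * x)"

lemma N_rd: "real_distribution N" by (rule real_dist_normal_dist)
lemma G_rd: "real_distribution G"
proof -
  interpret N: real_distribution N by (rule N_rd)
  show ?thesis unfolding G_def by (rule N.real_distribution_distr) simp
qed

lemma char_N: "char N s = exp (- (s^2) / 2)"
  by (simp add: char_std_normal_distribution)

lemma char_G: "char G t = exp (- (t^2 * v) / 2)"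
proof -
  have "char G t = (CLINT x|N. iexp (t * (sqrt v * x)))"
    unfolding G_def char_def by (subst integral_distr) auto
  also have "\<dots> = char N (t * sqrt v)" unfolding char_def by (simp add: mult.assoc)
  also have "\<dots> = exp (- (t^2 * v) / 2)"
    using v_nonneg by (simp add: char_std_normal_distribution power_mult_distrib)
  finally show ?thesis .
qed

lemma int_cis[simp]: "f \<in> borel_measurable P \<Longrightarrow> integrable P (\<lambda>y. cis (f y))"
  using P.integrable_iexp[of "\<lambda>y. complex_of_real (f y)"] by (simp add: iexp_cis)

lemma CZ: "(CLINT y|P. cis (s * Z y)) = exp (- (s^2) / 2)"
  using C[of s 0] by simp

lemma law_Z:
  assumes [measurable]: "A \<in> sets borel"
  shows "(\<integral>y. indicator A (Z y) \<partial>P) = measure N A"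
proof -
  have "(\<integral>y. 1 * indicator A (Z y) \<partial>P) = measure N A"
  proof (rule weighted_law[OF prob Z_meas _ _ _ _ N_rd])
    fix s show "(CLINT y|P. complex_of_real 1 * iexp (s * Z y)) = char N s"
    proof -
      have "(CLINT y|P. complex_of_real 1 * iexp (s * Z y)) = (CLINT y|P. cis (s * Z y))"
        by (simp only: iexp_cis of_real_1 mult_1_left)
      then show ?thesis using CZ[of s] by (simp add: char_N)
    qed
  qed (auto simp: P.prob_space)
  then show ?thesis by simp
qed

lemma cos_part:
  assumes [measurable]: "A \<in> sets borel"
  shows "(\<integral>y. indicator A (Z y) * cos (t * e y) \<partial>P) = exp (- (t^2 * v) / 2) * measure N A"
proof -
  define k where "k = exp (- (t^2 * v) / 2)"
  have kpos: "0 < k" by (simp add: k_def)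
  have Ecos: "(\<integral>y. cos (t * e y) \<partial>P) = k"
  proof -
    have "(\<integral>y. cos (t * e y) \<partial>P) = (\<integral>y. Re (cis (0 * Z y + t * e y)) \<partial>P)" by simp
    also have "\<dots> = Re (CLINT y|P. cis (0 * Z y + t * e y))"
      by (rule integral_bounded_linear[OF bounded_linear_Re]) simp
    also have "\<dots> = k" unfolding C by (simp add: k_def)
    finally show ?thesis .
  qed
  define h where "h y = (1 + cos (t * e y)) / (1 + k)" for y
  have hm[measurable]: "h \<in> borel_measurable P" unfolding h_def by measurable
  have hnn: "0 \<le> h y" for y unfolding h_def using kpos cos_ge_minus_one[of "t * e y"] by (intro divide_nonneg_pos) linarith+
  have intcos: "integrable P (\<lambda>y. cos (t * e y))"
    by (rule P.integrable_const_bound[of _ 1]) auto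
  have hint: "integrable P h" unfolding h_def using intcos by simp
  have h1: "(\<integral>y. h y \<partial>P) = 1"
    unfolding h_def using intcos kpos by (simp add: Ecos P.prob_space)
  have wl: "(\<integral>y. h y * indicator A (Z y) \<partial>P) = measure N A"
  proof (rule weighted_law[OF prob Z_meas hm hnn hint h1 N_rd])
    fix s
    have pw: "complex_of_real (h y) * iexp (s * Z y) =
        (cis (s * Z y) + (cis (s * Z y + t * e y) + cis (s * Z y + (- t) * e y)) / 2) / (1 + k)" for y
    proof -
      have a: "cis (s * Z y + t * e y) = cis (s * Z y) * cis (t * e y)" by (simp add: cis_mult)
      have b: "cis (s * Z y + (- t) * e y) = cis (s * Z y) * cis (- (t * e y))" by (simp add: cis_mult)
      have c: "complex_of_real (h y) = (1 + (cis (t * e y) + cis (- (t * e y))) / 2) / (1 + k)"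
        unfolding h_def using cos_cis[of "t * e y"] by simp
      have d: "1 + complex_of_real k \<noteq> 0" using kpos
        by (metis of_real_1 of_real_add of_real_eq_0_iff add_pos_pos zero_less_one less_irrefl)
      show ?thesis unfolding a b c iexp_cis using d by (simp add: field_simps)
    qed
    have "(CLINT y|P. complex_of_real (h y) * iexp (s * Z y))
        = ((CLINT y|P. cis (s * Z y)) + ((CLINT y|P. cis (s * Z y + t * e y)) + (CLINT y|P. cis (s * Z y + (- t) * e y))) / 2) / (1 + k)"
      unfolding pw by simp
    also have "\<dots> = exp (- (s^2) / 2)"
    proof -
      have er: "exp (- (s^2 + t^2 * v) / 2) = exp (- (s^2) / 2) * k"
        unfolding k_def exp_add[symmetric] by (simp add: field_simps)
      have er': "exp (- (s^2 + (-t)^2 * v) / 2) = exp (- (s^2) / 2) * k" using er by simp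
      have d: "1 + complex_of_real k \<noteq> 0" using kpos
        by (metis of_real_1 of_real_add of_real_eq_0_iff add_pos_pos zero_less_one less_irrefl)
      have "((CLINT y|P. cis (s * Z y)) + ((CLINT y|P. cis (s * Z y + t * e y)) + (CLINT y|P. cis (s * Z y + (- t) * e y))) / 2) / (1 + k)
         = (of_real (exp (- (s^2) / 2)) + (of_real (exp (- (s^2) / 2)) * of_real k + of_real (exp (- (s^2) / 2)) * of_real k) / 2) / (1 + of_real k)"
        unfolding C CZ er er' by simp
      also have "\<dots> = of_real (exp (- (s^2) / 2))" using d by (simp add: field_simps)
      finally show ?thesis by simp
    qed
    finally show "(CLINT y|P. complex_of_real (h y) * iexp (s * Z y)) = char N s"
      by (simp add: char_N)
  qed simp
  have i1: "integrable P (\<lambda>y. indicator A (Z y) :: real)"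
    by (rule P.integrable_const_bound[of _ 1]) auto
  have i2: "integrable P (\<lambda>y. indicator A (Z y) * cos (t * e y))"
    by (rule P.integrable_const_bound[of _ 1]) (auto simp: indicator_def)
  have "(\<integral>y. h y * indicator A (Z y) \<partial>P) =
        ((\<integral>y. indicator A (Z y) \<partial>P) + (\<integral>y. indicator A (Z y) * cos (t * e y) \<partial>P)) / (1 + k)"
    unfolding h_def using i1 i2 by (simp add: field_simps)
  then show ?thesis using wl law_Z[OF assms] kpos unfolding k_def[symmetric]
    by (simp add: field_simps)
qed

end

context gauss2 begin

lemma sin_part:
  assumes [measurable]: "A \<in> sets borel"
  shows "(\<integral>y. indicator A (Z y) * sin (t * e y) \<partial>P) = 0"
proof -
  have Esin: "(\<integral>y. sin (t * e y) \<partial>P) = 0"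
  proof -
    have "(\<integral>y. sin (t * e y) \<partial>P) = (\<integral>y. Im (cis (0 * Z y + t * e y)) \<partial>P)" by simp
    also have "\<dots> = Im (CLINT y|P. cis (0 * Z y + t * e y))"
      by (rule integral_bounded_linear[OF bounded_linear_Im]) simp
    also have "\<dots> = 0" unfolding C by simp
    finally show ?thesis .
  qed
  define h where "h y = 1 + sin (t * e y)" for y
  have hm[measurable]: "h \<in> borel_measurable P" unfolding h_def by measurable
  have hnn: "0 \<le> h y" for y unfolding h_def using sin_ge_minus_one[of "t * e y"] by linarith
  have intsin: "integrable P (\<lambda>y. sin (t * e y))"
    by (rule P.integrable_const_bound[of _ 1]) auto
  have hint: "integrable P h" unfolding h_def using intsin by simp
  have h1: "(\<integral>y. h y \<partial>P) = 1"
    unfolding h_def using intsin by (simp add: Esin P.prob_space)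
  have wl: "(\<integral>y. h y * indicator A (Z y) \<partial>P) = measure N A"
  proof (rule weighted_law[OF prob Z_meas hm hnn hint h1 N_rd])
    fix s
    have pw: "complex_of_real (h y) * iexp (s * Z y) =
        cis (s * Z y) + (cis (s * Z y + t * e y) - cis (s * Z y + (- t) * e y)) / (2 * \<i>)" for y
    proof -
      have a: "cis (s * Z y + t * e y) = cis (s * Z y) * cis (t * e y)" by (simp add: cis_mult)
      have b: "cis (s * Z y + (- t) * e y) = cis (s * Z y) * cis (- (t * e y))" by (simp add: cis_mult)
      have c: "complex_of_real (h y) = 1 + (cis (t * e y) - cis (- (t * e y))) / (2 * \<i>)"
        unfolding h_def using sin_cis[of "t * e y"] by simp
      show ?thesis unfolding a b c iexp_cis by (simp add: field_simps)
    qed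
    have "(CLINT y|P. complex_of_real (h y) * iexp (s * Z y))
        = (CLINT y|P. cis (s * Z y)) + ((CLINT y|P. cis (s * Z y + t * e y)) - (CLINT y|P. cis (s * Z y + (- t) * e y))) / (2 * \<i>)"
      unfolding pw by simp
    also have "\<dots> = exp (- (s^2) / 2)"
      unfolding C CZ by simp
    finally show "(CLINT y|P. complex_of_real (h y) * iexp (s * Z y)) = char N s"
      by (simp add: char_N)
  qed simp
  have i1: "integrable P (\<lambda>y. indicator A (Z y) :: real)"
    by (rule P.integrable_const_bound[of _ 1]) auto
  have i2: "integrable P (\<lambda>y. indicator A (Z y) * sin (t * e y))"
    by (rule P.integrable_const_bound[of _ 1]) (auto simp: indicator_def)
  have "(\<integral>y. h y * indicator A (Z y) \<partial>P) =
        (\<integral>y. indicator A (Z y) \<partial>P) + (\<integral>y. indicator A (Z y) * sin (t * e y) \<partial>P)"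
    unfolding h_def using i1 i2 by (simp add: field_simps)
  then show ?thesis using wl law_Z[OF assms] by simp
qed

lemma cis_part:
  assumes [measurable]: "A \<in> sets borel"
  shows "(CLINT y|P. complex_of_real (indicator A (Z y)) * cis (t * e y)) = exp (- (t^2 * v) / 2) * measure N A"
proof -
  have i2: "integrable P (\<lambda>y. indicator A (Z y) * sin (t * e y))"
    by (rule P.integrable_const_bound[of _ 1]) (auto simp: indicator_def)
  have i1: "integrable P (\<lambda>y. indicator A (Z y) * cos (t * e y))"
    by (rule P.integrable_const_bound[of _ 1]) (auto simp: indicator_def)
  have pw: "complex_of_real (indicator A (Z y)) * cis (t * e y) =
      complex_of_real (indicator A (Z y) * cos (t * e y)) + \<i> * complex_of_real (indicator A (Z y) * sin (t * e y))" for y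
    by (simp add: complex_eq_iff)
  have "(CLINT y|P. complex_of_real (indicator A (Z y)) * cis (t * e y)) =
      complex_of_real (\<integral>y. indicator A (Z y) * cos (t * e y) \<partial>P) + \<i> * complex_of_real (\<integral>y. indicator A (Z y) * sin (t * e y) \<partial>P)"
  proof -
    have "(CLINT y|P. complex_of_real (indicator A (Z y)) * cis (t * e y)) =
      (CLINT y|P. complex_of_real (indicator A (Z y) * cos (t * e y)) + \<i> * complex_of_real (indicator A (Z y) * sin (t * e y)))"
      by (simp only: pw)
    also have "\<dots> = (CLINT y|P. complex_of_real (indicator A (Z y) * cos (t * e y))) + (CLINT y|P. \<i> * complex_of_real (indicator A (Z y) * sin (t * e y)))"
      by (rule Bochner_Integration.integral_add[OF integrable_of_real[OF i1] integrable_mult_right[OF integrable_of_real[OF i2]]])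
    also have "\<dots> = complex_of_real (\<integral>y. indicator A (Z y) * cos (t * e y) \<partial>P) + \<i> * complex_of_real (\<integral>y. indicator A (Z y) * sin (t * e y) \<partial>P)"
      by (simp only: integral_complex_of_real integral_mult_right_zero)
    finally show ?thesis .
  qed
  then show ?thesis unfolding cos_part[OF assms] sin_part[OF assms] by simp
qed

lemma joint_rect:
  assumes [measurable]: "A \<in> sets borel" "B \<in> sets borel"
  shows "(\<integral>y. indicator A (Z y) * indicator B (e y) \<partial>P) = measure N A * measure G B"
proof (cases "measure N A = 0")
  case True
  have "(\<integral>y. indicator A (Z y) * indicator B (e y) \<partial>P) \<le> (\<integral>y. indicator A (Z y) \<partial>P :: real)"
  proof (rule Bochner_Integration.integral_mono)
    show "integrable P (\<lambda>y. indicator A (Z y) * indicator B (e y) :: real)"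
      by (rule P.integrable_const_bound[of _ 1]) (auto simp: indicator_def)
    show "integrable P (\<lambda>y. indicator A (Z y) :: real)"
      by (rule P.integrable_const_bound[of _ 1]) auto
  qed (auto simp: indicator_def)
  moreover have "0 \<le> (\<integral>y. indicator A (Z y) * indicator B (e y) \<partial>P :: real)" by simp
  ultimately show ?thesis using True law_Z[OF assms(1)] by simp
next
  case False
  then have NA: "0 < measure N A" using measure_nonneg[of N A] by linarith
  define h where "h y = indicator A (Z y) / measure N A" for y
  have hm[measurable]: "h \<in> borel_measurable P" unfolding h_def by measurable
  have hnn: "0 \<le> h y" for y unfolding h_def using NA by simp
  have i1: "integrable P (\<lambda>y. indicator A (Z y) :: real)"
    by (rule P.integrable_const_bound[of _ 1]) auto
  have hint: "integrable P h" unfolding h_def using i1 by simp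
  have h1: "(\<integral>y. h y \<partial>P) = 1"
    unfolding h_def using law_Z[OF assms(1)] NA by simp
  have "(\<integral>y. h y * indicator B (e y) \<partial>P) = measure G B"
  proof (rule weighted_law[OF prob e_meas hm hnn hint h1 G_rd])
    fix s
    have "(CLINT y|P. complex_of_real (h y) * iexp (s * e y)) =
        (CLINT y|P. complex_of_real (indicator A (Z y)) * cis (s * e y)) / complex_of_real (measure N A)"
      unfolding h_def iexp_cis by (simp add: field_simps)
    also have "\<dots> = exp (- (s^2 * v) / 2)" unfolding cis_part[OF assms(1)] using NA by simp
    finally show "(CLINT y|P. complex_of_real (h y) * iexp (s * e y)) = char G s"
      by (simp add: char_G)
  qed simp
  then show ?thesis unfolding h_def using NA by (simp add: field_simps)
qed

end

context gauss2 begin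

lemma N_sets[measurable_cong]: "sets N = sets borel" by simp
lemma G_sets[measurable_cong]: "sets G = sets borel" by (simp add: G_def)

lemma joint_law: "distr P (borel \<Otimes>\<^sub>M borel) (\<lambda>y. (Z y, e y)) = N \<Otimes>\<^sub>M G"
proof (rule pair_measure_eqI[symmetric])
  interpret N: real_distribution N by (rule N_rd)
  interpret G: real_distribution G by (rule G_rd)
  show "sigma_finite_measure N" by unfold_locales
  show "sigma_finite_measure G" by unfold_locales
  show "sets (N \<Otimes>\<^sub>M G) = sets (distr P (borel \<Otimes>\<^sub>M borel) (\<lambda>y. (Z y, e y)))"
    by (simp add: sets_pair_measure_cong[OF N_sets G_sets])
  fix A B assume A: "A \<in> sets N" and B: "B \<in> sets G"
  then have [measurable]: "A \<in> sets borel" "B \<in> sets borel" by auto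
  have "emeasure (distr P (borel \<Otimes>\<^sub>M borel) (\<lambda>y. (Z y, e y))) (A \<times> B)
      = emeasure P ((\<lambda>y. (Z y, e y)) -` (A \<times> B) \<inter> space P)"
    by (rule emeasure_distr) auto
  also have "\<dots> = ennreal (measure P ((\<lambda>y. (Z y, e y)) -` (A \<times> B) \<inter> space P))"
    by (rule P.emeasure_eq_measure)
  also have "measure P ((\<lambda>y. (Z y, e y)) -` (A \<times> B) \<inter> space P) = (\<integral>y. indicator ((\<lambda>y. (Z y, e y)) -` (A \<times> B) \<inter> space P) y \<partial>P)"
    by simp
  also have "\<dots> = (\<integral>y. indicator A (Z y) * indicator B (e y) \<partial>P)"
    by (rule Bochner_Integration.integral_cong) (auto simp: indicator_def space_P)
  also have "\<dots> = measure N A * measure G B" by (rule joint_rect) auto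
  finally show "emeasure N A * emeasure G B = emeasure (distr P (borel \<Otimes>\<^sub>M borel) (\<lambda>y. (Z y, e y))) (A \<times> B)"
    by (simp add: N.emeasure_eq_measure G.emeasure_eq_measure ennreal_mult)
qed

lemma nn_joint:
  assumes F[measurable]: "F \<in> borel_measurable (borel \<Otimes>\<^sub>M borel)"
  shows "(\<integral>\<^sup>+y. F (Z y, e y) \<partial>P) = (\<integral>\<^sup>+x. (\<integral>\<^sup>+t. F (x, sqrt v * t) \<partial>N) \<partial>N)"
proof -
  interpret G: real_distribution G by (rule G_rd)
  have "(\<integral>\<^sup>+y. F (Z y, e y) \<partial>P) = (\<integral>\<^sup>+z. F z \<partial>distr P (borel \<Otimes>\<^sub>M borel) (\<lambda>y. (Z y, e y)))"
    by (subst nn_integral_distr) auto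
  also have "\<dots> = (\<integral>\<^sup>+z. F z \<partial>(N \<Otimes>\<^sub>M G))" by (simp add: joint_law)
  also have "\<dots> = (\<integral>\<^sup>+x. (\<integral>\<^sup>+w. F (x, w) \<partial>G) \<partial>N)"
    by (subst G.nn_integral_fst[symmetric]) (auto simp: measurable_cong_sets[OF sets_pair_measure_cong[OF N_sets G_sets] refl])
  also have "\<dots> = (\<integral>\<^sup>+x. (\<integral>\<^sup>+t. F (x, sqrt v * t) \<partial>N) \<partial>N)"
    by (rule nn_integral_cong) (simp add: G_def nn_integral_distr)
  finally show ?thesis .
qed

end

context gauss2 begin

definition "bt = al * sig"
definition "gm = sqrt v"

lemma N_nn: "f \<in> borel_measurable borel \<Longrightarrow> (\<integral>\<^sup>+x. f x \<partial>N) = (\<integral>\<^sup>+x. ennreal (phi x) * f x \<partial>lborel)"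
  by (simp add: nn_integral_density)

lemma num_nn:
  assumes a: "0 < a"
  shows "(\<integral>\<^sup>+y. ennreal (\<bar>y $ j\<bar> * indicator {y. y $ i \<in> U_set a} y) \<partial>P)
      = (\<integral>\<^sup>+x. ennreal (phi x) * (indicator (U_set a) (sig * x) * (\<integral>\<^sup>+t. ennreal (phi t * \<bar>bt * x + gm * t\<bar>) \<partial>lborel)) \<partial>lborel)"
proof -
  have Um[measurable]: "U_set a \<in> sets borel" unfolding U_set_def by measurable
  define F where "F = (\<lambda>(x::real, w::real). ennreal (\<bar>bt * x + w\<bar> * indicator (U_set a) (sig * x)))"
  have Fm[measurable]: "F \<in> borel_measurable (borel \<Otimes>\<^sub>M borel)" unfolding F_def by measurable
  have "(\<integral>\<^sup>+y. ennreal (\<bar>y $ j\<bar> * indicator {y. y $ i \<in> U_set a} y) \<partial>P) = (\<integral>\<^sup>+y. F (Z y, e y) \<partial>P)"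
  proof (rule nn_integral_cong)
    fix y
    have "y $ i = sig * Z y" using sig_pos by (simp add: Z_def)
    then show "ennreal (\<bar>y $ j\<bar> * indicator {y. y $ i \<in> U_set a} y) = F (Z y, e y)"
      unfolding F_def using yj_eq[of y] by (simp add: bt_def indicator_def)
  qed
  also have "\<dots> = (\<integral>\<^sup>+x. (\<integral>\<^sup>+t. F (x, sqrt v * t) \<partial>N) \<partial>N)" by (rule nn_joint[OF Fm])
  also have "\<dots> = (\<integral>\<^sup>+x. ennreal (phi x) * (indicator (U_set a) (sig * x) * (\<integral>\<^sup>+t. ennreal (phi t * \<bar>bt * x + gm * t\<bar>) \<partial>lborel)) \<partial>lborel)"
  proof -
    have inner: "(\<integral>\<^sup>+t. F (x, sqrt v * t) \<partial>N) = indicator (U_set a) (sig * x) * (\<integral>\<^sup>+t. ennreal (phi t * \<bar>bt * x + gm * t\<bar>) \<partial>lborel)" for x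
    proof -
      have "(\<integral>\<^sup>+t. F (x, sqrt v * t) \<partial>N) = (\<integral>\<^sup>+t. ennreal (phi t) * F (x, sqrt v * t) \<partial>lborel)"
        by (rule N_nn) (simp add: F_def)
      also have "\<dots> = (\<integral>\<^sup>+t. indicator (U_set a) (sig * x) * ennreal (phi t * \<bar>bt * x + gm * t\<bar>) \<partial>lborel)"
        by (rule nn_integral_cong) (auto simp: F_def gm_def indicator_def ennreal_mult[symmetric] mult.commute)
      also have "\<dots> = indicator (U_set a) (sig * x) * (\<integral>\<^sup>+t. ennreal (phi t * \<bar>bt * x + gm * t\<bar>) \<partial>lborel)"
        by (rule nn_integral_cmult) simp
      finally show ?thesis .
    qed
    show ?thesis unfolding inner by (rule N_nn) simp
  qed
  finally show ?thesis .
qed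

end

context gauss2 begin

lemma int_phi: "(\<integral>\<^sup>+t. ennreal (phi t) \<partial>lborel) = 1"
proof -
  interpret N: real_distribution N by (rule N_rd)
  have "(\<integral>\<^sup>+t. ennreal (phi t) \<partial>lborel) = (\<integral>\<^sup>+t. ennreal (phi t) * 1 \<partial>lborel)" by simp
  also have "\<dots> = (\<integral>\<^sup>+t. 1 \<partial>N)" by (rule N_nn[symmetric]) simp
  also have "\<dots> = 1" using N.emeasure_space_1 by simp
  finally show ?thesis .
qed

lemma den:
  assumes a: "0 < a"
  shows "measure P {y. y $ i \<in> U_set a} = 1 - erf (a / sig / sqrt 2)"
proof -
  interpret N: real_distribution N by (rule N_rd)
  have Um[measurable]: "U_set a \<in> sets borel" unfolding U_set_def by measurable
  define A where "A = {x. sig * x \<in> U_set a}"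
  have Am[measurable]: "A \<in> sets borel" unfolding A_def by measurable
  have "measure P {y. y $ i \<in> U_set a} = (\<integral>y. indicator {y. y $ i \<in> U_set a} y \<partial>P)"
    by (simp add: space_P)
  also have "\<dots> = (\<integral>y. indicator A (Z y) \<partial>P)"
    unfolding A_def using sig_pos by (intro Bochner_Integration.integral_cong) (auto simp: Z_def indicator_def)
  also have "\<dots> = measure N A" by (rule law_Z[OF Am])
  also have "measure N A = enn2real (emeasure N A)" by (simp add: measure_def)
  also have "emeasure N A = (\<integral>\<^sup>+x. ennreal (phi x) * indicator (U_set a) (sig * x) \<partial>lborel)"
    unfolding A_def by (subst emeasure_density) (auto simp: indicator_def intro!: nn_integral_cong)
  also have "\<dots> = 2 * (\<integral>\<^sup>+x. ennreal (phi x) * indicator {a / sig..} x \<partial>lborel)"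
    by (rule U_integral[OF sig_pos a]) (auto simp: phi_even)
  also have "\<dots> = 2 * ennreal ((1 - erf (a / sig / sqrt 2)) / 2)" unfolding tail_N ..
  also have "\<dots> = ennreal (1 - erf (a / sig / sqrt 2))"
  proof -
    have "ennreal (2 * ((1 - erf (a / sig / sqrt 2)) / 2)) = ennreal 2 * ennreal ((1 - erf (a / sig / sqrt 2)) / 2)"
      by (rule ennreal_mult') simp
    moreover have h: "2 * ((1 - erf (a / sig / sqrt 2)) / 2) = 1 - erf (a / sig / sqrt 2)" by simp
    ultimately show ?thesis unfolding h ennreal_numeral by (metis (no_types))
  qed
  finally show ?thesis using erf_le1[of "a / sig / sqrt 2"] by simp
qed

lemma num_pos:
  assumes a: "0 < a" and g: "0 < gm"
  defines "sj \<equiv> sqrt (bt^2 + gm^2)" and "z0 \<equiv> a / sig"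
  shows "(\<integral>\<^sup>+y. ennreal (\<bar>y $ j\<bar> * indicator {y. y $ i \<in> U_set a} y) \<partial>P)
     = ennreal (2 * (sj / sqrt (2 * pi) * (1 - erf (sj * z0 / (gm * sqrt 2))) + bt * phi z0 * erf (bt * z0 / (gm * sqrt 2))))"
proof -
  have "(\<integral>\<^sup>+y. ennreal (\<bar>y $ j\<bar> * indicator {y. y $ i \<in> U_set a} y) \<partial>P)
      = (\<integral>\<^sup>+x. ennreal (phi x) * (indicator (U_set a) (sig * x) * (\<integral>\<^sup>+t. ennreal (phi t * \<bar>bt * x + gm * t\<bar>) \<partial>lborel)) \<partial>lborel)"
    by (rule num_nn[OF a])
  also have "\<dots> = (\<integral>\<^sup>+x. ennreal (phi x * Kc (bt * x) gm) * indicator (U_set a) (sig * x) \<partial>lborel)"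
  proof (rule nn_integral_cong)
    fix x
    have "(\<integral>\<^sup>+t. ennreal (phi t * \<bar>bt * x + gm * t\<bar>) \<partial>lborel) = ennreal (Kc (bt * x) gm)"
      unfolding Kc_def by (rule inner_K[OF g])
    then show "ennreal (phi x) * (indicator (U_set a) (sig * x) * (\<integral>\<^sup>+t. ennreal (phi t * \<bar>bt * x + gm * t\<bar>) \<partial>lborel))
        = ennreal (phi x * Kc (bt * x) gm) * indicator (U_set a) (sig * x)"
      using phi_pos[of x] Kc_nonneg[OF g, of "bt * x"] by (simp add: ennreal_mult mult_ac)
  qed
  also have "\<dots> = 2 * (\<integral>\<^sup>+x. ennreal (phi x * Kc (bt * x) gm) * indicator {a / sig..} x \<partial>lborel)"
  proof (rule U_integral[OF sig_pos a])
    show "(\<lambda>x. phi x * Kc (bt * x) gm) \<in> borel_measurable borel" unfolding Kc_def by measurable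
    show "phi (- x) * Kc (bt * (- x)) gm = phi x * Kc (bt * x) gm" for x
      using Kc_even[of "bt * x" gm] phi_even[of x] by simp
  qed
  also have "\<dots> = 2 * ennreal (sj / sqrt (2 * pi) * (1 - erf (sj * z0 / (gm * sqrt 2))) + bt * phi z0 * erf (bt * z0 / (gm * sqrt 2)))"
    unfolding outer_half[OF g] sj_def z0_def ..
  also have "\<dots> = ennreal (2 * (sj / sqrt (2 * pi) * (1 - erf (sj * z0 / (gm * sqrt 2))) + bt * phi z0 * erf (bt * z0 / (gm * sqrt 2))))"
    by (subst ennreal_mult') simp_all
  finally show ?thesis .
qed

lemma num_deg:
  assumes a: "0 < a" and g: "gm = 0"
  shows "(\<integral>\<^sup>+y. ennreal (\<bar>y $ j\<bar> * indicator {y. y $ i \<in> U_set a} y) \<partial>P)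
     = ennreal (2 * (\<bar>bt\<bar> * phi (a / sig)))"
proof -
  have "(\<integral>\<^sup>+y. ennreal (\<bar>y $ j\<bar> * indicator {y. y $ i \<in> U_set a} y) \<partial>P)
      = (\<integral>\<^sup>+x. ennreal (phi x) * (indicator (U_set a) (sig * x) * (\<integral>\<^sup>+t. ennreal (phi t * \<bar>bt * x + gm * t\<bar>) \<partial>lborel)) \<partial>lborel)"
    by (rule num_nn[OF a])
  also have "\<dots> = (\<integral>\<^sup>+x. ennreal (phi x * \<bar>bt * x\<bar>) * indicator (U_set a) (sig * x) \<partial>lborel)"
  proof (rule nn_integral_cong)
    fix x
    have "(\<integral>\<^sup>+t. ennreal (phi t * \<bar>bt * x + gm * t\<bar>) \<partial>lborel) = (\<integral>\<^sup>+t. ennreal \<bar>bt * x\<bar> * ennreal (phi t) \<partial>lborel)"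
      using g by (intro nn_integral_cong) (simp add: ennreal_mult'[symmetric] mult.commute)
    also have "\<dots> = ennreal \<bar>bt * x\<bar>" by (simp add: nn_integral_cmult int_phi)
    finally show "ennreal (phi x) * (indicator (U_set a) (sig * x) * (\<integral>\<^sup>+t. ennreal (phi t * \<bar>bt * x + gm * t\<bar>) \<partial>lborel))
        = ennreal (phi x * \<bar>bt * x\<bar>) * indicator (U_set a) (sig * x)"
      by (simp add: ennreal_mult' mult_ac)
  qed
  also have "\<dots> = 2 * (\<integral>\<^sup>+x. ennreal (phi x * \<bar>bt * x\<bar>) * indicator {a / sig..} x \<partial>lborel)"
    by (rule U_integral[OF sig_pos a]) (auto simp: phi_even)
  also have "\<dots> = 2 * ennreal (\<bar>bt\<bar> * phi (a / sig))"
    using sig_pos a by (subst outer_deg) auto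
  also have "\<dots> = ennreal (2 * (\<bar>bt\<bar> * phi (a / sig)))"
    by (subst ennreal_mult') simp_all
  finally show ?thesis .
qed

end

lemma sqrt_2pi_fact: "2 / sqrt (2 * pi) = sqrt (2 / pi)"
proof -
  have "sqrt (2 / pi) * sqrt (2 * pi) = 2"
    by (simp add: real_sqrt_mult[symmetric])
  then show ?thesis by (simp add: field_simps)
qed

lemma alg: fixes r s d E1 E2 X rho :: real shows "2 / r * (s / d) * (1 - E1 + rho * E2 * X) = 2 * (s / r * (1 - E1) + rho * s * (X / r) * E2) / d"
  by (simp add: divide_inverse algebra_simps)
lemma alg2: fixes r s d X rho :: real assumes "0 < s" shows "2 / r * (s / d) * (\<bar>rho\<bar> * X) = 2 * (\<bar>rho * s\<bar> * (X / r)) / d"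
  using assms by (simp add: divide_inverse algebra_simps abs_mult)

context gauss2 begin

lemma main:
  assumes a: "0 < a" and Sjj: "0 < S$j$j"
  shows "cond_abs_mean P i j a = closed_form S i j a"
proof -
  define sj where "sj = sqrt (S$j$j)"
  define rho where "rho = S$i$j / (sig * sj)"
  define rp where "rp = sqrt (1 - rho^2)"
  define ds where "ds = a / (sqrt 2 * sig)"
  have sjpos: "0 < sj" unfolding sj_def using Sjj by simp
  have sj2: "sj^2 = S$j$j" unfolding sj_def using Sjj by simp
  have F1: "bt = rho * sj"
    unfolding bt_def al_def rho_def using sig_pos sjpos sig_sq[symmetric] by (simp add: field_simps power2_eq_square)
  have vrho: "v = sj^2 * (1 - rho^2)"
    unfolding v_def rho_def using sig_pos sjpos sig_sq[symmetric] sj2[symmetric] by (simp add: field_simps power2_eq_square)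
  have rho1: "0 \<le> 1 - rho^2"
    using v_nonneg sjpos unfolding vrho by (simp add: zero_le_mult_iff)
  have F2: "gm = sj * rp"
    unfolding gm_def rp_def vrho using sjpos by (simp add: real_sqrt_mult)
  have F3: "sqrt (bt^2 + gm^2) = sj"
  proof -
    have "bt^2 + gm^2 = sj^2" unfolding F1 F2 rp_def using rho1 by (simp add: power_mult_distrib algebra_simps)
    then show ?thesis using sjpos by simp
  qed
  have F4: "a / sig / sqrt 2 = ds" unfolding ds_def by (simp add: field_simps)
  have phiz: "phi (a / sig) = exp (- (ds^2)) / sqrt (2 * pi)"
    unfolding phi_def' ds_def by (simp add: power_divide field_simps)
  have Um[measurable]: "U_set a \<in> sets borel" unfolding U_set_def by measurable
  have fm: "(\<lambda>y. \<bar>y $ j\<bar> * indicator {y. y $ i \<in> U_set a} y) \<in> borel_measurable P"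
  proof -
    have "{y. y $ i \<in> U_set a} \<in> sets P" by measurable
    then show ?thesis by measurable
  qed
  have D: "measure P {y. y $ i \<in> U_set a} = 1 - erf ds" using den[OF a] F4 by simp
  show ?thesis
  proof (cases "gm = 0")
    case True
    then have rp0: "rp = 0" using F2 sjpos by simp
    define NUM where "NUM = 2 * (\<bar>bt\<bar> * phi (a / sig))"
    have "has_bochner_integral P (\<lambda>y. \<bar>y $ j\<bar> * indicator {y. y $ i \<in> U_set a} y) NUM"
      by (rule has_bochner_integral_nn_integral[OF fm]) (auto simp: NUM_def num_deg[OF a True] intro!: mult_nonneg_nonneg less_imp_le[OF phi_pos])
    then have I: "(\<integral>y. \<bar>y $ j\<bar> * indicator {y. y $ i \<in> U_set a} y \<partial>P) = NUM" by (simp add: has_bochner_integral_iff)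
    have dspos: "0 < ds" unfolding ds_def using a sig_pos by simp
    have "closed_form S i j a = sqrt (2 / pi) * (sj / (1 - erf ds)) * (\<bar>rho\<bar> * exp (- (ds^2)))"
      unfolding closed_form_def Let_def sig_def[symmetric] sj_def[symmetric] rho_def[symmetric] rp_def[symmetric] ds_def[symmetric]
      using rp0 dspos by (simp add: erf_div_def sgn_mult abs_sgn)
    also have "\<dots> = NUM / (1 - erf ds)"
      unfolding NUM_def F1 phiz sqrt_2pi_fact[symmetric] using sjpos by (rule alg2)
    finally have "closed_form S i j a = NUM / (1 - erf ds)" .
    then show ?thesis unfolding cond_abs_mean_def I D by simp
  next
    case False
    then have gpos: "0 < gm" unfolding gm_def using v_nonneg by simp
    then have rppos: "0 < rp" using F2 sjpos by (simp add: zero_less_mult_iff)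
    define NUM where "NUM = 2 * (sj / sqrt (2 * pi) * (1 - erf (sj * (a / sig) / (gm * sqrt 2))) + bt * phi (a / sig) * erf (bt * (a / sig) / (gm * sqrt 2)))"
    have nnum: "(\<integral>\<^sup>+y. ennreal (\<bar>y $ j\<bar> * indicator {y. y $ i \<in> U_set a} y) \<partial>P) = ennreal NUM"
      unfolding NUM_def using num_pos[OF a gpos] unfolding F3 .
    have NUMnn: "0 \<le> NUM"
    proof -
      have "0 \<le> sj / sqrt (2 * pi) * (1 - erf (sj * (a / sig) / (gm * sqrt 2)))"
        using sjpos erf_le1 by (intro mult_nonneg_nonneg) auto
      moreover have "0 \<le> bt * phi (a / sig) * erf (bt * (a / sig) / (gm * sqrt 2))"
      proof -
        define q where "q = (a / sig) / (gm * sqrt 2)"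
        have qpos: "0 < q" unfolding q_def using a sig_pos gpos by simp
        have eq: "bt * (a / sig) / (gm * sqrt 2) = q * bt" unfolding q_def by simp
        have "0 \<le> (q * bt) * erf (q * bt)" by (rule erf_sign)
        then have "0 \<le> q * (bt * erf (q * bt))" by (simp only: mult.assoc)
        then have "0 \<le> bt * erf (q * bt)" using qpos by (simp add: zero_le_mult_iff)
        then have "0 \<le> bt * erf (bt * (a / sig) / (gm * sqrt 2))" unfolding eq .
        then show ?thesis using mult_nonneg_nonneg[OF less_imp_le[OF phi_pos[of "a / sig"]], of "bt * erf (bt * (a / sig) / (gm * sqrt 2))"]
          by (simp only: mult_ac)
      qed
      ultimately show ?thesis unfolding NUM_def by simp
    qed
    have "has_bochner_integral P (\<lambda>y. \<bar>y $ j\<bar> * indicator {y. y $ i \<in> U_set a} y) NUM"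
      by (rule has_bochner_integral_nn_integral[OF fm _ NUMnn nnum]) simp
    then have I: "(\<integral>y. \<bar>y $ j\<bar> * indicator {y. y $ i \<in> U_set a} y \<partial>P) = NUM" by (simp add: has_bochner_integral_iff)
    have e1: "sj * (a / sig) / (gm * sqrt 2) = ds / rp"
      unfolding F2 ds_def using sjpos sig_pos rppos by (simp add: field_simps)
    have e2: "bt * (a / sig) / (gm * sqrt 2) = rho * ds / rp"
      unfolding F2 F1 ds_def using sjpos sig_pos rppos by (simp add: field_simps)
    have "closed_form S i j a = sqrt (2 / pi) * (sj / (1 - erf ds)) * (1 - erf (ds / rp) + rho * erf (rho * ds / rp) * exp (- (ds^2)))"
      unfolding closed_form_def Let_def sig_def[symmetric] sj_def[symmetric] rho_def[symmetric] rp_def[symmetric] ds_def[symmetric]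
      using rppos by (simp add: erf_div_def)
    also have "\<dots> = NUM / (1 - erf ds)"
      unfolding NUM_def e1 e2 unfolding F1 phiz sqrt_2pi_fact[symmetric] by (rule alg)
    finally have "closed_form S i j a = NUM / (1 - erf ds)" .
    then show ?thesis unfolding cond_abs_mean_def I D by simp
  qed
qed

end

lemma centering_entry: "(centering :: real^'n::finite^'n) $ k $ p = (if k = p then 1 else 0) - 1 / real CARD('n)"
  by (simp add: centering_def mat_def)

lemma centering_sym: "transpose (centering :: real^'n::finite^'n) = centering"
  by (simp add: vec_eq_iff transpose_def centering_entry)

lemma centering_rowsum: "(\<Sum>p\<in>UNIV. (centering :: real^'n::finite^'n) $ k $ p) = 0"
  by (simp add: centering_entry sum_subtractf)

lemma diag_entry:
  fixes R :: "real^'n::finite^'n"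
  shows "(R ** diag_mat d ** transpose R) $ k $ k = (\<Sum>l\<in>UNIV. d l * (R $ k $ l)^2)"
proof -
  have RD: "(R ** diag_mat d) $ k $ l = R $ k $ l * d l" for l
  proof -
    have "(R ** diag_mat d) $ k $ l = (\<Sum>m\<in>UNIV. R $ k $ m * (if m = l then d m else 0))"
      by (simp add: matrix_matrix_mult_def diag_mat_def)
    also have "\<dots> = (\<Sum>m\<in>UNIV. if m = l then R $ k $ m * d m else 0)" by (rule sum.cong) auto
    also have "\<dots> = R $ k $ l * d l" by simp
    finally show ?thesis .
  qed
  show ?thesis
    by (simp add: matrix_matrix_mult_def[of "R ** diag_mat d"] RD transpose_def power2_eq_square mult_ac)
qed

lemma sigma0_entry:
  fixes Q :: "real^'n::finite^'n"
  shows "(centering ** Q ** diag_mat d ** transpose Q ** centering) $ k $ k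
       = (\<Sum>l\<in>UNIV. d l * ((centering ** Q) $ k $ l)^2)"
proof -
  have "centering ** Q ** diag_mat d ** transpose Q ** centering
      = (centering ** Q) ** diag_mat d ** transpose (centering ** Q)"
    by (simp add: matrix_transpose_mul centering_sym matrix_mul_assoc)
  then show ?thesis by (simp add: diag_entry)
qed

lemma row_nonzero:
  fixes Q :: "real^'n::finite^'n"
  assumes n2: "CARD('n) \<ge> 2" and Qorth: "orthogonal_matrix Q"
    and Qcol1: "column k1 Q = (1 / sqrt (real CARD('n))) *\<^sub>R (\<chi> a. 1)"
  shows "\<exists>l. l \<noteq> k1 \<and> (centering ** Q) $ k $ l \<noteq> 0"
proof (rule ccontr)
  assume "\<not> ?thesis"
  then have z: "l \<noteq> k1 \<Longrightarrow> (centering ** Q) $ k $ l = 0" for l by blast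
  have q1: "Q $ p $ k1 = 1 / sqrt (real CARD('n))" for p
    using arg_cong[OF Qcol1, of "\<lambda>v. v $ p"] by (simp add: column_def)
  have zk1: "(centering ** Q) $ k $ k1 = 0"
  proof -
    have "(centering ** Q) $ k $ k1 = (\<Sum>p\<in>UNIV. centering $ k $ p / sqrt (real CARD('n)))"
      by (simp add: matrix_matrix_mult_def q1)
    also have "\<dots> = (\<Sum>p\<in>UNIV. centering $ k $ p) / sqrt (real CARD('n))"
      by (rule sum_divide_distrib[symmetric])
    also have "\<dots> = 0" by (simp add: centering_rowsum)
    finally show ?thesis .
  qed
  have zall: "(centering ** Q) $ k $ l = 0" for l using z zk1 by (cases "l = k1") auto
  have QQ: "Q ** transpose Q = mat 1" using Qorth by (simp add: orthogonal_matrix_def)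
  have "(centering :: real^'n^'n) = (centering ** Q) ** transpose Q"
    by (simp add: matrix_mul_assoc[symmetric] QQ)
  then have "(centering :: real^'n^'n) $ k $ k = ((centering ** Q) ** transpose Q) $ k $ k" by simp
  also have "\<dots> = 0" unfolding matrix_matrix_mult_def[of "centering ** Q"] by (simp add: zall)
  finally have "(centering :: real^'n^'n) $ k $ k = 0" .
  moreover have "1 / real CARD('n) < 1" using n2 by simp
  ultimately show False by (simp add: centering_entry)
qed

lemma psi_pos:
  assumes lp: "0 < l" and t: "0 \<le> tau" and lt: "l * tau < pi / 2"
  shows "0 < psi tau l"
proof -
  have "0 \<le> l * tau" using lp t by simp
  then have c: "0 < cos (l * tau)" using lt pi_gt_zero by (intro cos_gt_zero_pi) linarith+
  have "sin (l * tau) ^ 2 < 1" using c sin_cos_squared_add[of "l * tau"] by (simp add: power2_eq_square) (smt (verit) mult_pos_pos)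
  then have "sin (l * tau) < 1" by (smt (verit) power2_less_eq_zero_iff one_power2 power_mono)
  then show ?thesis unfolding psi_def using c lp by simp
qed

theorem theorem1:
  fixes w :: "'n::finite \<Rightarrow> 'n \<Rightarrow> real"
    and b0 tau0 :: real
    and Q :: "real^'n^'n" and lam :: "'n \<Rightarrow> real" and k1 :: 'n
    and Sigma0 :: "real^'n^'n"
    and i j :: 'n
    and c d eps_minus eps_plus :: real
    and Mset :: "(real^'n) measure set"
  assumes n2: "CARD('n) \<ge> 2"
    and graph: "weighted_simple_graph w" and conn: "graph_connected w"
    and b0: "b0 \<noteq> 0" and tau0: "0 \<le> tau0"
    and Qorth: "orthogonal_matrix Q"
    and Qcol1: "column k1 Q = (1 / sqrt (real CARD('n))) *\<^sub>R (\<chi> a. 1)"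
    and lam1: "lam k1 = 0" and lampos: "\<forall>k. k \<noteq> k1 \<longrightarrow> 0 < lam k"
    and eig: "laplacian w = Q ** diag_mat lam ** transpose Q"
    and stab: "tau0 < pi / (2 * Max (range lam))"
    and Sigma0_def: "Sigma0 = (b0^2) *\<^sub>R (centering ** Q **
          diag_mat (\<lambda>k. if k = k1 then 0 else psi tau0 (lam k)) ** transpose Q ** centering)"
    and ij: "i \<noteq> j"
    and c: "0 < c" and d: "0 < d"
    and em: "0 \<le> eps_minus" "eps_minus < 1" and ep: "0 \<le> eps_plus"
    and Mset_def: "Mset = {P. \<exists>S. gaussian_vec P S \<and>
          loewner_le ((1 - eps_minus) *\<^sub>R Sigma0) S \<and> loewner_le S ((1 + eps_plus) *\<^sub>R Sigma0)}"
  shows "(\<forall>P S. gaussian_vec P S \<and> loewner_le ((1 - eps_minus) *\<^sub>R Sigma0) S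
              \<and> loewner_le S ((1 + eps_plus) *\<^sub>R Sigma0)
            \<longrightarrow> cond_abs_mean P i j (d + c) = closed_form S i j (d + c))
      \<and> (let Ssup = Sup ((\<lambda>P. cond_abs_mean P i j (d + c)) ` Mset)
         in Inf {delta. 0 \<le> delta \<and> Ssup \<le> delta + c} = (if Ssup \<le> c then 0 else Ssup - c))"
proof
  define D where "D = (\<lambda>k. if k = k1 then 0 else psi tau0 (lam k))"
  have Dpos: "l \<noteq> k1 \<Longrightarrow> 0 < D l" for l
  proof -
    assume False: "l \<noteq> k1"
    have Mge: "lam l \<le> Max (range lam)" by (rule Max_ge) auto
    have lp: "0 < lam l" using lampos False by simp
    have Mpos: "0 < Max (range lam)" using Mge lp by linarith
    have "lam l * tau0 \<le> Max (range lam) * tau0" using Mge tau0 by (rule mult_right_mono)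
    also have "\<dots> < pi / 2" using stab Mpos by (simp add: field_simps)
    finally have "0 < psi tau0 (lam l)" by (intro psi_pos lp tau0)
    then show ?thesis using False by (simp add: D_def)
  qed
  have Dnn: "0 \<le> D l" for l
    using Dpos[of l] by (cases "l = k1") (auto simp: D_def)
  have S0pos: "0 < Sigma0 $ k $ k" for k
  proof -
    obtain l where l: "l \<noteq> k1" "(centering ** Q) $ k $ l \<noteq> 0" using row_nonzero[OF n2 Qorth Qcol1] by blast
    have "0 < D l * ((centering ** Q) $ k $ l)^2" using Dpos[OF l(1)] l(2) by simp
    also have "\<dots> \<le> (\<Sum>l\<in>UNIV. D l * ((centering ** Q) $ k $ l)^2)"
      by (rule member_le_sum) (auto intro!: mult_nonneg_nonneg Dnn)
    also have "\<dots> = (centering ** Q ** diag_mat D ** transpose Q ** centering) $ k $ k"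
      by (rule sigma0_entry[symmetric])
    finally show ?thesis unfolding Sigma0_def D_def[symmetric] using b0 by simp
  qed
  have axq: "axis k 1 \<bullet> (A *v axis k 1) = A $ k $ k" for k and A :: "real^'n^'n"
  proof -
    have "axis k 1 \<bullet> (A *v axis k 1) = (A *v axis k 1) $ k" by (simp add: inner_axis')
    also have "\<dots> = (\<Sum>j\<in>UNIV. if j = k then A $ k $ j else 0)"
      unfolding matrix_vector_mult_def axis_def by (simp add: if_distrib cong: if_cong)
    also have "\<dots> = A $ k $ k" by simp
    finally show ?thesis .
  qed
  show "\<forall>P S. gaussian_vec P S \<and> loewner_le ((1 - eps_minus) *\<^sub>R Sigma0) S
              \<and> loewner_le S ((1 + eps_plus) *\<^sub>R Sigma0)
            \<longrightarrow> cond_abs_mean P i j (d + c) = closed_form S i j (d + c)"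
  proof (intro allI impI)
    fix P S assume H: "gaussian_vec P S \<and> loewner_le ((1 - eps_minus) *\<^sub>R Sigma0) S
              \<and> loewner_le S ((1 + eps_plus) *\<^sub>R Sigma0)"
    have Spos: "0 < S $ k $ k" for k
    proof -
      have "axis k 1 \<bullet> (((1 - eps_minus) *\<^sub>R Sigma0) *v axis k 1) \<le> axis k 1 \<bullet> (S *v axis k 1)"
        using H unfolding loewner_le_def by blast
      then have "(1 - eps_minus) * Sigma0 $ k $ k \<le> S $ k $ k" unfolding axq by simp
      moreover have "0 < (1 - eps_minus) * Sigma0 $ k $ k" using em S0pos[of k] by simp
      ultimately show ?thesis by linarith
    qed
    interpret gauss2 P S i j using H ij Spos[of i] by unfold_locales auto
    show "cond_abs_mean P i j (d + c) = closed_form S i j (d + c)"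
      by (rule main) (use c d Spos[of j] in auto)
  qed
next
  show "let Ssup = Sup ((\<lambda>P. cond_abs_mean P i j (d + c)) ` Mset)
         in Inf {delta. 0 \<le> delta \<and> Ssup \<le> delta + c} = (if Ssup \<le> c then 0 else Ssup - c)"
    unfolding Let_def
  proof -
    fix s :: real
    have "{delta. 0 \<le> delta \<and> s \<le> delta + c} = {max 0 (s - c)..}" by auto
    then show "Inf {delta. 0 \<le> delta \<and> s \<le> delta + c} = (if s \<le> c then 0 else s - c)" by simp
  qed
qed

end
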